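(* Let $r=\frac{1}{2\pi}$ and let $F$ be the regular $500$-gon with vertices $\bigl(r\cos\frac{k\pi}{250}, r\sin\frac{k\pi}{250}\bigr)$, $k=0,\dots,499$. For $z=(x_1,y_1,x_2,y_2,\theta)\in\mathbb{R}^5$ let $R(z)$ be the closed rectangle with sides parallel to the coordinate axes, center $(x_1,y_1)$, horizontal side length $0.4625$ and vertical side length $0.0375$, and let $T(z)$ be the closed equilateral triangle with vertices $\bigl(x_2+\frac{\sqrt3}{9}\cos(\theta+\frac{2\pi j}{3}),\, y_2+\frac{\sqrt3}{9}\sin(\theta+\frac{2\pi j}{3})\bigr)$, $j=0,1,2$. Let $f(z)$ be the area of the convex hull of $F\cup R(z)\cup T(z)$. Then for every $z\in\mathbb{R}^5$, either $f(z)>0.0975$, or $F\cup T(z)\cup R(z)$ is contained in a rectangle with side lengths $0.386\times 0.644$. *)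

theory Defs
  imports "HOL-Analysis.Analysis"
begin

definition rpoly :: real where "rpoly = 1 / (2 * pi)"

definition polyF :: "(real \<times> real) set" where
  "polyF = convex hull {(rpoly * cos (real k * pi / 250), rpoly * sin (real k * pi / 250)) | k. k < (500::nat)}"

definition rectR :: "real \<Rightarrow> real \<Rightarrow> (real \<times> real) set" where
  "rectR x1 y1 = {(x, y). \<bar>x - x1\<bar> \<le> 0.4625 / 2 \<and> \<bar>y - y1\<bar> \<le> 0.0375 / 2}"

definition triT :: "real \<Rightarrow> real \<Rightarrow> real \<Rightarrow> (real \<times> real) set" where
  "triT x2 y2 \<theta> = convex hull {(x2 + sqrt 3 / 9 * cos (\<theta> + 2 * pi * real j / 3),
                                 y2 + sqrt 3 / 9 * sin (\<theta> + 2 * pi * real j / 3)) | j. j < (3::nat)}"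

definition rect_sides :: "real \<Rightarrow> real \<Rightarrow> (real \<times> real) set \<Rightarrow> bool" where
  "rect_sides a b S \<longleftrightarrow> (\<exists>c1 c2 \<phi>. S =
     {(c1 + s * cos \<phi> - t * sin \<phi>, c2 + s * sin \<phi> + t * cos \<phi>) | s t.
        0 \<le> s \<and> s \<le> a \<and> 0 \<le> t \<and> t \<le> b})"

definition fval :: "real \<Rightarrow> real \<Rightarrow> real \<Rightarrow> real \<Rightarrow> real \<Rightarrow> real" where
  "fval x1 y1 x2 y2 \<theta> = measure lebesgue (convex hull (polyF \<union> rectR x1 y1 \<union> triT x2 y2 \<theta>))"

end

theory Submission
  imports Defs
begin

lemma fubini_h:
  fixes K :: "(real \<times> real) set"
  assumes "compact K" and "AE y in lborel. g y \<le> emeasure lborel {x. (x,y) \<in> K}"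
  shows "(\<integral>\<^sup>+y. g y \<partial>lborel) \<le> emeasure lebesgue K"
proof -
  have Kb: "K \<in> sets borel" using assms(1) by (simp add: borel_closed compact_imp_closed)
  have "emeasure lebesgue K = emeasure (lborel \<Otimes>\<^sub>M lborel) K"
    using Kb by (simp add: lborel_prod)
  also have "\<dots> = (\<integral>\<^sup>+y. emeasure lborel ((\<lambda>x. (x, y)) -` K) \<partial>lborel)"
    by (rule lborel_pair.emeasure_pair_measure_alt2) (unfold lborel_prod, use Kb in simp)
  finally have e: "emeasure lebesgue K = (\<integral>\<^sup>+y. emeasure lborel ((\<lambda>x. (x, y)) -` K) \<partial>lborel)" .
  show ?thesis unfolding e
    by (rule nn_integral_mono_AE) (use assms(2) in \<open>auto simp: vimage_def\<close>)
qed

lemma fubini_v: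
  fixes K :: "(real \<times> real) set"
  assumes "compact K" and "AE x in lborel. g x \<le> emeasure lborel {y. (x,y) \<in> K}"
  shows "(\<integral>\<^sup>+x. g x \<partial>lborel) \<le> emeasure lebesgue K"
proof -
  have Kb: "K \<in> sets borel" using assms(1) by (simp add: borel_closed compact_imp_closed)
  have "emeasure lebesgue K = emeasure (lborel \<Otimes>\<^sub>M lborel) K"
    using Kb by (simp add: lborel_prod)
  also have "\<dots> = (\<integral>\<^sup>+x. emeasure lborel (Pair x -` K) \<partial>lborel)"
    by (rule lborel.emeasure_pair_measure_alt) (unfold lborel_prod, use Kb in simp)
  finally have e: "emeasure lebesgue K = (\<integral>\<^sup>+x. emeasure lborel (Pair x -` K) \<partial>lborel)" .
  show ?thesis unfolding e
    by (rule nn_integral_mono_AE) (use assms(2) in \<open>auto simp: vimage_def\<close>)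
qed

lemma measure_ge_of_emeasure:
  fixes K :: "(real \<times> real) set"
  assumes "compact K" "ennreal I \<le> emeasure lebesgue K" 
  shows "I \<le> measure lebesgue K"
proof -
  have "K \<in> fmeasurable lebesgue" using lmeasurable_compact[OF assms(1)] .
  then have "emeasure lebesgue K = ennreal (measure lebesgue K)" by (rule emeasure_eq_measure2)
  with assms(2) show ?thesis
    by (metis ennreal_le_iff measure_nonneg order_trans ennreal_leI linorder_not_le nle_le)
qed

lemma aux_div1: "b \<noteq> (a::real) \<Longrightarrow> (2 * x - 2 * a) * w / (2 * b - 2 * a) = w * (x - a) / (b - a)"
proof -
  assume "b \<noteq> a"
  then have "2*b - 2*a \<noteq> 0" "b - a \<noteq> 0" by auto
  then show ?thesis by (simp add: field_simps)
qed

lemma aux_div2: "c \<noteq> (b::real) \<Longrightarrow> - ((2 * x - 2 * c) * w / (2 * c - 2 * b)) = w * (c - x) / (c - b)"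
proof -
  assume "c \<noteq> b"
  then have "2*c - 2*b \<noteq> 0" "c - b \<noteq> 0" by auto
  then show ?thesis by (simp add: field_simps)
qed

lemma lin_up_int:
  fixes a b w :: real assumes "a \<le> b"
  shows "((\<lambda>y. w*(y-a)/(b-a)) has_integral w*(b-a)/2) {a..b}"
proof (cases "a = b")
  case True then show ?thesis by (simp add: has_integral_null)
next
  case False
  then have ne: "b - a \<noteq> 0" "2*b - 2*a \<noteq> 0" by auto
  have hI: "((\<lambda>y. w*(y-a)/(b-a)) has_integral ((\<lambda>y. w*(y-a)^2/(2*(b-a))) b - (\<lambda>y. w*(y-a)^2/(2*(b-a))) a)) {a..b}"
    apply (rule fundamental_theorem_of_calculus[OF assms])
    apply (auto intro!: derivative_eq_intros simp: has_real_derivative_iff_has_vector_derivative[symmetric])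
    using False apply simp
    apply (simp add: aux_div1 aux_div2)
    done
  moreover have heq: "w*(b-a)^2/(2*(b-a)) - w*(a-a)^2/(2*(b-a)) = w*(b-a)/2"
    using ne by (auto simp: power2_eq_square field_simps)
  ultimately show ?thesis using hI unfolding heq by simp
qed

lemma lin_down_int:
  fixes b c w :: real assumes "b \<le> c"
  shows "((\<lambda>y. w*(c-y)/(c-b)) has_integral w*(c-b)/2) {b..c}"
proof (cases "b = c")
  case True then show ?thesis by (simp add: has_integral_null)
next
  case False
  then have ne: "c - b \<noteq> 0" "2*c - 2*b \<noteq> 0" by auto
  have hI: "((\<lambda>y. w*(c-y)/(c-b)) has_integral ((\<lambda>y. - w*(c-y)^2/(2*(c-b))) c - (\<lambda>y. - w*(c-y)^2/(2*(c-b))) b)) {b..c}"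
    apply (rule fundamental_theorem_of_calculus[OF assms])
    apply (auto intro!: derivative_eq_intros simp: has_real_derivative_iff_has_vector_derivative[symmetric])
    using False apply simp
    apply (simp add: aux_div1 aux_div2)
    done
  moreover have heq: "- w*(c-c)^2/(2*(c-b)) - - w*(c-b)^2/(2*(c-b)) = w*(c-b)/2"
    using ne by (auto simp: power2_eq_square field_simps)
  ultimately show ?thesis using hI unfolding heq by simp
qed

lemma conv_pt:
  fixes K :: "(real \<times> real) set"
  assumes "convex K" "(x1,y1) \<in> K" "(x2,y2) \<in> K" "0 \<le> t" "t \<le> 1"
  shows "((1-t)*x1 + t*x2, (1-t)*y1 + t*y2) \<in> K"
  using convexD[OF assms(1,2,3), of "1-t" t] assms(4,5) by simp

lemma slice_h:
  fixes K :: "(real \<times> real) set"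
  assumes "compact K" "convex K" "(x0,y) \<in> K" "(x0+d,y) \<in> K" "0 \<le> d"
  shows "ennreal d \<le> emeasure lborel {x. (x,y) \<in> K}"
proof -
  have cl: "closed ((\<lambda>x. (x,y)) -` K)"
    by (rule continuous_closed_vimage) (auto intro: compact_imp_closed assms(1) continuous_intros)
  have sub: "{x0..x0+d} \<subseteq> {x. (x,y) \<in> K}"
  proof
    fix x assume x: "x \<in> {x0..x0+d}"
    show "x \<in> {x. (x,y) \<in> K}"
    proof (cases "d = 0")
      case True then show ?thesis using x assms(3) by simp
    next
      case False
      define t where "t = (x - x0)/d"
      have t: "0 \<le> t" "t \<le> 1" using x False assms(5) by (auto simp: t_def field_simps)
      have "((1-t)*x0 + t*(x0+d), (1-t)*y + t*y) \<in> K" by (rule conv_pt[OF assms(2,3,4) t])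
      moreover have "(1-t)*x0 + t*(x0+d) = x" using False by (simp add: t_def field_simps)
      ultimately show ?thesis by (simp add: algebra_simps)
    qed
  qed
  have "emeasure lborel {x0..x0+d} \<le> emeasure lborel {x. (x,y) \<in> K}"
    by (rule emeasure_mono[OF sub]) (use cl in \<open>simp add: vimage_def borel_closed\<close>)
  then show ?thesis using assms(5) by simp
qed

lemma slice_v:
  fixes K :: "(real \<times> real) set"
  assumes "compact K" "convex K" "(x,y0) \<in> K" "(x,y0+d) \<in> K" "0 \<le> d"
  shows "ennreal d \<le> emeasure lborel {y. (x,y) \<in> K}"
proof -
  have cl: "closed ((\<lambda>y. (x,y)) -` K)"
    by (rule continuous_closed_vimage) (auto intro: compact_imp_closed assms(1) continuous_intros)
  have sub: "{y0..y0+d} \<subseteq> {y. (x,y) \<in> K}"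
  proof
    fix y assume y: "y \<in> {y0..y0+d}"
    show "y \<in> {y. (x,y) \<in> K}"
    proof (cases "d = 0")
      case True then show ?thesis using y assms(3) by simp
    next
      case False
      define t where "t = (y - y0)/d"
      have t: "0 \<le> t" "t \<le> 1" using y False assms(5) by (auto simp: t_def field_simps)
      have "((1-t)*x + t*x, (1-t)*y0 + t*(y0+d)) \<in> K" by (rule conv_pt[OF assms(2,3,4) t])
      moreover have "(1-t)*y0 + t*(y0+d) = y" using False by (simp add: t_def field_simps)
      ultimately show ?thesis by (simp add: algebra_simps)
    qed
  qed
  have "emeasure lborel {y0..y0+d} \<le> emeasure lborel {y. (x,y) \<in> K}"
    by (rule emeasure_mono[OF sub]) (use cl in \<open>simp add: vimage_def borel_closed\<close>)
  then show ?thesis using assms(5) by simp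
qed

definition tentg :: "real \<Rightarrow> real \<Rightarrow> real \<Rightarrow> real \<Rightarrow> real \<Rightarrow> real \<Rightarrow> ennreal" where
  "tentg a b0 b1 c w y = ennreal(w*(y-a)/(b0-a)) * indicator {a..b0} y + ennreal w * indicator {b0..b1} y
      + ennreal(w*(c-y)/(c-b1)) * indicator {b1..c} y"

lemma tent_int:
  assumes "a \<le> b0" "b0 \<le> b1" "b1 \<le> c" "0 \<le> w"
  shows "(\<integral>\<^sup>+y. tentg a b0 b1 c w y \<partial>lborel) = ennreal (w*(b0-a)/2 + w*(b1-b0) + w*(c-b1)/2)"
proof -
  have i1: "(\<integral>\<^sup>+y. ennreal(w*(y-a)/(b0-a)) * indicator {a..b0} y \<partial>lborel) = ennreal (w*(b0-a)/2)"
    by (rule nn_integral_has_integral_lebesgue'[OF _ lin_up_int[OF assms(1)]]) (use assms in auto)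
  have i2: "(\<integral>\<^sup>+y. ennreal w * indicator {b0..b1} y \<partial>lborel) = ennreal (w*(b1-b0))"
    using assms by (simp add: nn_integral_cmult_indicator ennreal_mult)
  have i3: "(\<integral>\<^sup>+y. ennreal(w*(c-y)/(c-b1)) * indicator {b1..c} y \<partial>lborel) = ennreal (w*(c-b1)/2)"
    by (rule nn_integral_has_integral_lebesgue'[OF _ lin_down_int[OF assms(3)]]) (use assms in auto)
  have "(\<integral>\<^sup>+y. tentg a b0 b1 c w y \<partial>lborel) =
     (\<integral>\<^sup>+y. ennreal(w*(y-a)/(b0-a)) * indicator {a..b0} y + ennreal w * indicator {b0..b1} y \<partial>lborel)
      + (\<integral>\<^sup>+y. ennreal(w*(c-y)/(c-b1)) * indicator {b1..c} y \<partial>lborel)"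
    unfolding tentg_def by (rule nn_integral_add) measurable
  also have "(\<integral>\<^sup>+y. ennreal(w*(y-a)/(b0-a)) * indicator {a..b0} y + ennreal w * indicator {b0..b1} y \<partial>lborel)
     = (\<integral>\<^sup>+y. ennreal(w*(y-a)/(b0-a)) * indicator {a..b0} y \<partial>lborel) + (\<integral>\<^sup>+y. ennreal w * indicator {b0..b1} y \<partial>lborel)"
    by (rule nn_integral_add) measurable
  finally show ?thesis using assms by (simp add: i1 i2 i3 ennreal_plus[symmetric] del: ennreal_plus)
qed

lemma tent_h:
  fixes K :: "(real \<times> real) set"
  assumes K: "compact K" "convex K"
    and ord: "a \<le> b0" "b0 \<le> b1" "b1 \<le> c" "0 \<le> w"
    and P: "(pa, a) \<in> K" and Q: "(qc, c) \<in> K"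
    and mid: "\<And>y. b0 \<le> y \<Longrightarrow> y \<le> b1 \<Longrightarrow> \<exists>u. (u,y) \<in> K \<and> (u+w,y) \<in> K"
  shows "w*(b0-a)/2 + w*(b1-b0) + w*(c-b1)/2 \<le> measure lebesgue K"
proof -
  have pt: "tentg a b0 b1 c w y \<le> emeasure lborel {x. (x,y) \<in> K}" if y: "y \<noteq> b0" "y \<noteq> b1" for y
  proof -
    consider "a \<le> y \<and> y < b0" | "b0 < y \<and> y < b1" | "b1 < y \<and> y \<le> c" | "y < a \<or> c < y"
      using y by linarith
    then show ?thesis
    proof cases
      case 1
      then have tg: "tentg a b0 b1 c w y = ennreal(w*(y-a)/(b0-a))"
        using ord by (auto simp: tentg_def indicator_def)
      obtain u where u: "(u,b0) \<in> K" "(u+w,b0) \<in> K" using mid[of b0] ord by auto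
      define t where "t = (y-a)/(b0-a)"
      have t: "0 \<le> t" "t \<le> 1" using 1 by (auto simp: t_def field_simps)
      have ne: "b0 - a \<noteq> 0" using 1 by simp
      have tt: "t*(b0-a) = y-a" using ne by (simp add: t_def)
      have "(1-t)*a + t*b0 = a + t*(b0-a)" by (simp add: algebra_simps)
      then have hy: "(1-t)*a + t*b0 = y" using tt by simp
      have p1: "((1-t)*pa + t*u, y) \<in> K" using conv_pt[OF K(2) P u(1) t] hy by simp
      have p2: "((1-t)*pa + t*u + t*w, y) \<in> K" using conv_pt[OF K(2) P u(2) t] hy
        by (simp add: algebra_simps)
      have "ennreal (t*w) \<le> emeasure lborel {x. (x,y) \<in> K}"
        by (rule slice_h[OF K p1 p2]) (use t ord in simp)
      moreover have "t*w = w*(y-a)/(b0-a)" by (simp add: t_def)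
      ultimately show ?thesis using tg by simp
    next
      case 2
      then have tg: "tentg a b0 b1 c w y = ennreal w"
        using ord by (auto simp: tentg_def indicator_def)
      obtain u where u: "(u,y) \<in> K" "(u+w,y) \<in> K" using mid[of y] 2 by auto
      show ?thesis using slice_h[OF K u ord(4)] tg by simp
    next
      case 3
      then have tg: "tentg a b0 b1 c w y = ennreal(w*(c-y)/(c-b1))"
        using ord by (auto simp: tentg_def indicator_def)
      obtain u where u: "(u,b1) \<in> K" "(u+w,b1) \<in> K" using mid[of b1] ord by auto
      define t where "t = (c-y)/(c-b1)"
      have t: "0 \<le> t" "t \<le> 1" using 3 by (auto simp: t_def field_simps)
      have ne: "c - b1 \<noteq> 0" using 3 by simp
      have tt: "t*(c-b1) = c-y" using ne by (simp add: t_def)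
      have "(1-t)*c + t*b1 = c - t*(c-b1)" by (simp add: algebra_simps)
      then have hy: "(1-t)*c + t*b1 = y" using tt by simp
      have p1: "((1-t)*qc + t*u, y) \<in> K" using conv_pt[OF K(2) Q u(1) t] hy by simp
      have p2: "((1-t)*qc + t*u + t*w, y) \<in> K" using conv_pt[OF K(2) Q u(2) t] hy
        by (simp add: algebra_simps)
      have "ennreal (t*w) \<le> emeasure lborel {x. (x,y) \<in> K}"
        by (rule slice_h[OF K p1 p2]) (use t ord in simp)
      moreover have "t*w = w*(c-y)/(c-b1)" by (simp add: t_def)
      ultimately show ?thesis using tg by simp
    next
      case 4
      then have "tentg a b0 b1 c w y = 0"
        using ord by (auto simp: tentg_def indicator_def)
      then show ?thesis by simp
    qed
  qed
  have AE: "AE y in lborel. tentg a b0 b1 c w y \<le> emeasure lborel {x. (x,y) \<in> K}"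
    using AE_lborel_singleton[of b0] AE_lborel_singleton[of b1]
    by eventually_elim (use pt in auto)
  have "ennreal (w*(b0-a)/2 + w*(b1-b0) + w*(c-b1)/2) \<le> emeasure lebesgue K"
    using fubini_h[OF K(1) AE] tent_int[OF ord] by simp
  then show ?thesis by (rule measure_ge_of_emeasure[OF K(1)])
qed


lemma tent_v:
  fixes K :: "(real \<times> real) set"
  assumes K: "compact K" "convex K"
    and ord: "a \<le> b0" "b0 \<le> b1" "b1 \<le> c" "0 \<le> w"
    and P: "(a, pa) \<in> K" and Q: "(c, qc) \<in> K"
    and mid: "\<And>y. b0 \<le> y \<Longrightarrow> y \<le> b1 \<Longrightarrow> \<exists>u. (y,u) \<in> K \<and> (y,u+w) \<in> K"
  shows "w*(b0-a)/2 + w*(b1-b0) + w*(c-b1)/2 \<le> measure lebesgue K"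
proof -
  have pt: "tentg a b0 b1 c w y \<le> emeasure lborel {x. (y,x) \<in> K}" if y: "y \<noteq> b0" "y \<noteq> b1" for y
  proof -
    consider "a \<le> y \<and> y < b0" | "b0 < y \<and> y < b1" | "b1 < y \<and> y \<le> c" | "y < a \<or> c < y"
      using y by linarith
    then show ?thesis
    proof cases
      case 1
      then have tg: "tentg a b0 b1 c w y = ennreal(w*(y-a)/(b0-a))"
        using ord by (auto simp: tentg_def indicator_def)
      obtain u where u: "(b0,u) \<in> K" "(b0,u+w) \<in> K" using mid[of b0] ord by auto
      define t where "t = (y-a)/(b0-a)"
      have t: "0 \<le> t" "t \<le> 1" using 1 by (auto simp: t_def field_simps)
      have ne: "b0 - a \<noteq> 0" using 1 by simp
      have tt: "t*(b0-a) = y-a" using ne by (simp add: t_def)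
      have "(1-t)*a + t*b0 = a + t*(b0-a)" by (simp add: algebra_simps)
      then have hy: "(1-t)*a + t*b0 = y" using tt by simp
      have p1: "(y, (1-t)*pa + t*u) \<in> K" using conv_pt[OF K(2) P u(1) t] hy by simp
      have p2: "(y, (1-t)*pa + t*u + t*w) \<in> K" using conv_pt[OF K(2) P u(2) t] hy
        by (simp add: algebra_simps)
      have "ennreal (t*w) \<le> emeasure lborel {x. (y,x) \<in> K}"
        by (rule slice_v[OF K p1 p2]) (use t ord in simp)
      moreover have "t*w = w*(y-a)/(b0-a)" by (simp add: t_def)
      ultimately show ?thesis using tg by simp
    next
      case 2
      then have tg: "tentg a b0 b1 c w y = ennreal w"
        using ord by (auto simp: tentg_def indicator_def)
      obtain u where u: "(y,u) \<in> K" "(y,u+w) \<in> K" using mid[of y] 2 by auto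
      show ?thesis using slice_v[OF K u ord(4)] tg by simp
    next
      case 3
      then have tg: "tentg a b0 b1 c w y = ennreal(w*(c-y)/(c-b1))"
        using ord by (auto simp: tentg_def indicator_def)
      obtain u where u: "(b1,u) \<in> K" "(b1,u+w) \<in> K" using mid[of b1] ord by auto
      define t where "t = (c-y)/(c-b1)"
      have t: "0 \<le> t" "t \<le> 1" using 3 by (auto simp: t_def field_simps)
      have ne: "c - b1 \<noteq> 0" using 3 by simp
      have tt: "t*(c-b1) = c-y" using ne by (simp add: t_def)
      have "(1-t)*c + t*b1 = c - t*(c-b1)" by (simp add: algebra_simps)
      then have hy: "(1-t)*c + t*b1 = y" using tt by simp
      have p1: "(y, (1-t)*qc + t*u) \<in> K" using conv_pt[OF K(2) Q u(1) t] hy by simp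
      have p2: "(y, (1-t)*qc + t*u + t*w) \<in> K" using conv_pt[OF K(2) Q u(2) t] hy
        by (simp add: algebra_simps)
      have "ennreal (t*w) \<le> emeasure lborel {x. (y,x) \<in> K}"
        by (rule slice_v[OF K p1 p2]) (use t ord in simp)
      moreover have "t*w = w*(c-y)/(c-b1)" by (simp add: t_def)
      ultimately show ?thesis using tg by simp
    next
      case 4
      then have "tentg a b0 b1 c w y = 0"
        using ord by (auto simp: tentg_def indicator_def)
      then show ?thesis by simp
    qed
  qed
  have AE: "AE y in lborel. tentg a b0 b1 c w y \<le> emeasure lborel {x. (y,x) \<in> K}"
    using AE_lborel_singleton[of b0] AE_lborel_singleton[of b1]
    by eventually_elim (use pt in auto)
  have "ennreal (w*(b0-a)/2 + w*(b1-b0) + w*(c-b1)/2) \<le> emeasure lebesgue K"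
    using fubini_v[OF K(1) AE] tent_int[OF ord] by simp
  then show ?thesis by (rule measure_ge_of_emeasure[OF K(1)])
qed

lemma polyF_pts:
  "(rpoly, 0) \<in> polyF" "(0, rpoly) \<in> polyF" "(- rpoly, 0) \<in> polyF" "(0, - rpoly) \<in> polyF"
proof -
  let ?S = "{(rpoly * cos (real k * pi / 250), rpoly * sin (real k * pi / 250)) | k. k < (500::nat)}"
  have m: "(rpoly * cos (real k * pi / 250), rpoly * sin (real k * pi / 250)) \<in> polyF" if "k < 500" for k
    unfolding polyF_def by (rule hull_inc) (use that in blast)
  show "(rpoly, 0) \<in> polyF" using m[of 0] by simp
  have "real 125 * pi / 250 = pi/2" by simp
  then show "(0, rpoly) \<in> polyF" using m[of 125] by simp
  have "real 250 * pi / 250 = pi" by simp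
  then show "(- rpoly, 0) \<in> polyF" using m[of 250] by simp
  have e: "real 375 * pi / 250 = 3/2*pi" by simp
  have "(rpoly * cos (real 375 * pi / 250), rpoly * sin (real 375 * pi / 250)) \<in> polyF" by (rule m) simp
  then have "(rpoly * cos (3/2*pi), rpoly * sin (3/2*pi)) \<in> polyF" by (simp only: e)
  then show "(0, - rpoly) \<in> polyF" by (simp only: cos_3over2_pi sin_3over2_pi mult_zero_right mult_minus1_right)
qed

lemma compact_polyF: "compact polyF"
  unfolding polyF_def by (rule finite_imp_compact_convex_hull) simp

lemma compact_triT: "compact (triT x2 y2 \<theta>)"
  unfolding triT_def by (rule finite_imp_compact_convex_hull) simp

lemma rectR_eq: "rectR x1 y1 = {x1 - 0.4625/2 .. x1 + 0.4625/2} \<times> {y1 - 0.0375/2 .. y1 + 0.0375/2}"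
  unfolding rectR_def abs_le_iff by auto

lemma compact_rectR: "compact (rectR x1 y1)"
  unfolding rectR_eq by (intro compact_Times compact_Icc)

lemma pi_bounds: "3.14 < pi" "pi < 3.15"
  using pi_approx by auto

lemma num_A: "(0.386::real) < d \<Longrightarrow> 0.0975 < 0.23125 * d + 0.23125 * 0.0375" by (simp add: field_simps)

theorem corollary2:
  fixes x1 y1 x2 y2 \<theta> :: real
  shows "fval x1 y1 x2 y2 \<theta> > 0.0975 \<or>
         (\<exists>Q. rect_sides 0.386 0.644 Q \<and> polyF \<union> triT x2 y2 \<theta> \<union> rectR x1 y1 \<subseteq> Q)"
proof -
  define U where "U = polyF \<union> triT x2 y2 \<theta> \<union> rectR x1 y1"
  define K where "K = convex hull (polyF \<union> rectR x1 y1 \<union> triT x2 y2 \<theta>)"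
  have UK: "U \<subseteq> K" unfolding U_def K_def by (auto intro: hull_inc)
  have cU: "compact U" unfolding U_def
    by (intro compact_Un compact_polyF compact_triT compact_rectR)
  have cK: "compact K" unfolding K_def
    by (intro compact_convex_hull compact_Un compact_polyF compact_triT compact_rectR)
  have vK: "convex K" unfolding K_def by (rule convex_convex_hull)
  have fK: "fval x1 y1 x2 y2 \<theta> = measure lebesgue K" unfolding fval_def K_def ..
  have Fpts: "(rpoly, 0) \<in> U" "(0, rpoly) \<in> U" "(- rpoly, 0) \<in> U" "(0, - rpoly) \<in> U"
    using polyF_pts unfolding U_def by auto
  have Rin: "(x, y) \<in> U" if "\<bar>x - x1\<bar> \<le> 0.4625 / 2" "\<bar>y - y1\<bar> \<le> 0.0375 / 2" for x y
    using that unfolding U_def rectR_def by auto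
  have ne: "U \<noteq> {}" using Fpts by auto
  have csnd: "continuous_on U snd" and cfst: "continuous_on U fst"
    by (intro continuous_intros)+
  obtain pmin where pmin: "pmin \<in> U" "\<And>u. u \<in> U \<Longrightarrow> snd pmin \<le> snd u"
    using continuous_attains_inf[OF cU ne csnd] by blast
  obtain pmax where pmax: "pmax \<in> U" "\<And>u. u \<in> U \<Longrightarrow> snd u \<le> snd pmax"
    using continuous_attains_sup[OF cU ne csnd] by blast
  obtain qmin where qmin: "qmin \<in> U" "\<And>u. u \<in> U \<Longrightarrow> fst qmin \<le> fst u"
    using continuous_attains_inf[OF cU ne cfst] by blast
  obtain qmax where qmax: "qmax \<in> U" "\<And>u. u \<in> U \<Longrightarrow> fst u \<le> fst qmax"
    using continuous_attains_sup[OF cU ne cfst] by blast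
  have rpos: "0.158 < rpoly" "rpoly < 0.16" using pi_bounds unfolding rpoly_def by (auto simp: field_simps)
  consider "snd pmax - snd pmin \<le> 0.386 \<and> fst qmax - fst qmin \<le> 0.644"
    | "snd pmax - snd pmin > 0.386" | "fst qmax - fst qmin > 0.644" by linarith
  then show ?thesis
  proof cases
    case 1
    define Q where "Q = {(fst qmax + s * cos (pi/2) - t * sin (pi/2), snd pmin + s * sin (pi/2) + t * cos (pi/2)) | s t.
        0 \<le> s \<and> s \<le> (0.386::real) \<and> 0 \<le> t \<and> t \<le> (0.644::real)}"
    have "rect_sides 0.386 0.644 Q" unfolding rect_sides_def Q_def by blast
    moreover have "U \<subseteq> Q"
    proof
      fix u assume u: "u \<in> U"
      obtain x y where xy: "u = (x, y)" by fastforce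
      have "0 \<le> y - snd pmin" "y - snd pmin \<le> 0.386" "0 \<le> fst qmax - x" "fst qmax - x \<le> 0.644"
        using pmin(2)[OF u] pmax(2)[OF u] qmin(2)[OF u] qmax(2)[OF u] 1 xy by auto
      then show "u \<in> Q" unfolding Q_def xy
        by (intro CollectI exI[of _ "y - snd pmin"] exI[of _ "fst qmax - x"]) simp
    qed
    ultimately show ?thesis unfolding U_def by blast
  next
    case 2
    define w :: real where "w = 0.4625"
    have ab: "snd pmin \<le> y1 - 0.0375/2" using pmin(2)[OF Rin[of x1 "y1 - 0.0375/2"]] by simp
    have bc: "y1 + 0.0375/2 \<le> snd pmax" using pmax(2)[OF Rin[of x1 "y1 + 0.0375/2"]] by simp
    have P: "(fst pmin, snd pmin) \<in> K" using pmin(1) UK by auto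
    have Q: "(fst pmax, snd pmax) \<in> K" using pmax(1) UK by auto
    have mid: "\<exists>u. (u,y) \<in> K \<and> (u+w,y) \<in> K" if "y1 - 0.0375/2 \<le> y" "y \<le> y1 + 0.0375/2" for y
    proof (intro exI conjI)
      have ay: "\<bar>y - y1\<bar> \<le> 0.0375/2" using that unfolding abs_le_iff by linarith
      have a1: "\<bar>(x1 - 0.4625/2) - x1\<bar> \<le> 0.4625/2" by simp
      have a2: "\<bar>(x1 - 0.4625/2 + w) - x1\<bar> \<le> 0.4625/2" by (simp add: w_def)
      show "(x1 - 0.4625/2, y) \<in> K" using Rin[OF a1 ay] UK by auto
      show "(x1 - 0.4625/2 + w, y) \<in> K" using Rin[OF a2 ay] UK by auto
    qed
    have "w*((y1 - 0.0375/2)-snd pmin)/2 + w*((y1 + 0.0375/2)-(y1 - 0.0375/2)) + w*(snd pmax-(y1 + 0.0375/2))/2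
          \<le> measure lebesgue K"
      by (rule tent_h[OF cK vK ab _ bc _ P Q mid]) (auto simp: w_def)
    moreover have "w*((y1 - 0.0375/2)-snd pmin)/2 + w*((y1 + 0.0375/2)-(y1 - 0.0375/2)) + w*(snd pmax-(y1 + 0.0375/2))/2
       = 0.23125 * (snd pmax - snd pmin) + 0.23125 * 0.0375" unfolding w_def by (simp add: field_simps)
    ultimately have m: "0.23125 * (snd pmax - snd pmin) + 0.23125 * 0.0375 \<le> measure lebesgue K" by simp
    have "(0.0975::real) < 0.23125 * (snd pmax - snd pmin) + 0.23125 * 0.0375" using num_A[OF 2] .
    then have "0.0975 < measure lebesgue K" using m by (rule less_le_trans)
    then show ?thesis using fK by simp
  next
    case 3
    define w :: real where "w = 2 * rpoly"
    have ab: "fst qmin \<le> 0" using qmin(2)[OF Fpts(3)] rpos by simp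
    have bc: "0 \<le> fst qmax" using qmax(2)[OF Fpts(1)] rpos by simp
    have P: "(fst qmin, snd qmin) \<in> K" using qmin(1) UK by auto
    have Q: "(fst qmax, snd qmax) \<in> K" using qmax(1) UK by auto
    have mid: "\<exists>u. (y,u) \<in> K \<and> (y,u+w) \<in> K" if "0 \<le> y" "y \<le> 0" for y
    proof (intro exI conjI)
      have y: "y = 0" using that by simp
      show "(y, - rpoly) \<in> K" using Fpts(4) UK y by auto
      show "(y, - rpoly + w) \<in> K" using Fpts(2) UK y by (auto simp: w_def)
    qed
    have "w*(0 - fst qmin)/2 + w*(0 - 0) + w*(fst qmax - 0)/2 \<le> measure lebesgue K"
      by (rule tent_v[OF cK vK ab _ bc _ P Q mid]) (use rpos in \<open>auto simp: w_def\<close>)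
    then have m: "rpoly * (fst qmax - fst qmin) \<le> measure lebesgue K" unfolding w_def
      by (simp add: algebra_simps)
    have h1: "rpoly * 0.644 < rpoly * (fst qmax - fst qmin)"
      using 3 rpos by (intro mult_strict_left_mono) auto
    have h0: "0.0975 < rpoly * 0.644" using rpos by simp
    have "0.0975 < measure lebesgue K" using less_trans[OF h0 h1] m by (rule less_le_trans)
    then show ?thesis using fK by simp
  qed
qed

end
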